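(* Let $N\ge 1$ and let $U_1,\dots,U_N$ be independent real random variables, each super-uniform, i.e. $\mathbb P(U_i\le x)\le x$ for all $x\in[0,1]$ (and $\mathbb P(U_i< 0)=0$). Then for every $\delta\in(0,1]$, $$\mathbb P\Big(\forall t>0,\ \frac1N\sum_{i=1}^N \mathbf 1\{U_i\le t\}<\frac{t}{\delta}\Big)\ \ge\ 1-\delta .$$
   Context: Note the strict inequality "$<$" inside the probability. *)

theory Defs
  imports "HOL-Probability.Probability"
begin

end

theory Submission
  imports Defs
begin

definition cntf :: "real \<Rightarrow> nat \<Rightarrow> (nat \<Rightarrow> real) \<Rightarrow> nat set \<Rightarrow> nat \<Rightarrow> real" where
  "cntf d N y L k = (\<Sum>j\<in>L. if y j \<le> d * real k / real N then 1 else 0)"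

definition Ev :: "real \<Rightarrow> nat \<Rightarrow> real \<Rightarrow> (nat \<Rightarrow> real) \<Rightarrow> nat set \<Rightarrow> nat \<Rightarrow> bool" where
  "Ev d N c y L r = (real r \<le> c + cntf d N y L r \<and> (\<forall>k\<in>{r<..N}. \<not> real k \<le> c + cntf d N y L k))"

lemma cntf_meas: "(\<lambda>y. cntf d N y L k) \<in> borel_measurable (PiM L (\<lambda>_. borel))"
  unfolding cntf_def
proof (rule borel_measurable_sum)
  fix j assume j: "j \<in> L"
  have "(\<lambda>y. y j) \<in> borel_measurable (PiM L (\<lambda>_. borel))"
    using j by (rule measurable_component_singleton)
  then show "(\<lambda>y. if y j \<le> d * real k / real N then 1 else 0) \<in> borel_measurable (PiM L (\<lambda>_. borel))"
    by measurable
qed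

lemma Ev_sets: "{y \<in> space (PiM L (\<lambda>_. borel)). Ev d N c y L r} \<in> sets (PiM L (\<lambda>_. borel))"
proof -
  have [measurable]: "\<And>k. (\<lambda>y. cntf d N y L k) \<in> borel_measurable (PiM L (\<lambda>_. borel))"
    by (rule cntf_meas)
  show ?thesis unfolding Ev_def by measurable
qed

lemma cntf_restrict: "cntf d N (restrict y L) L k = cntf d N y L k"
  unfolding cntf_def by (rule sum.cong) auto

lemma Ev_restrict: "Ev d N c (restrict y L) L r = Ev d N c y L r"
  unfolding Ev_def cntf_restrict ..

lemma sum_if_card: "finite L \<Longrightarrow> (\<Sum>j\<in>L. if P j then 1 else 0) = real (card {j\<in>L. P j})"
  proof (induct L rule: finite_induct)
  case (insert x F)
  have "{j \<in> insert x F. P j} = (if P x then insert x {j\<in>F. P j} else {j\<in>F. P j})" by auto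
  then show ?case using insert by simp
qed simp

lemma cntf_card: "finite L \<Longrightarrow> cntf d N y L k = real (card {j\<in>L. y j \<le> d * real k / real N})"
  unfolding cntf_def by (rule sum_if_card)


theorem mainTheorem1:
  fixes M :: "'a measure" and U :: "nat \<Rightarrow> 'a \<Rightarrow> real" and N :: nat and \<delta> :: real
  assumes "prob_space M"
    and "N \<ge> 1"
    and "\<And>i. i \<in> {1..N} \<Longrightarrow> U i \<in> borel_measurable M"
    and "prob_space.indep_vars M (\<lambda>_. borel) U {1..N}"
    and "\<And>i x. i \<in> {1..N} \<Longrightarrow> 0 \<le> x \<Longrightarrow> x \<le> 1 \<Longrightarrow>
            measure M {\<omega> \<in> space M. U i \<omega> \<le> x} \<le> x"
    and "\<And>i. i \<in> {1..N} \<Longrightarrow> measure M {\<omega> \<in> space M. U i \<omega> < 0} = 0"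
    and "0 < \<delta>" and "\<delta> \<le> 1"
  shows "measure M {\<omega> \<in> space M. \<forall>t>0.
            (1 / real N) * real (card {i \<in> {1..N}. U i \<omega> \<le> t}) < t / \<delta>} \<ge> 1 - \<delta>"
proof -
  interpret P: prob_space M by fact
  define I where "I = {1..N}"
  define s where "s k = \<delta> * real k / real N" for k :: nat
  define E where "E r = {\<omega>\<in>space M. Ev \<delta> N 0 (\<lambda>j. U j \<omega>) I r}" for r
  define Ei where "Ei i r = {\<omega>\<in>space M. Ev \<delta> N 1 (\<lambda>j. U j \<omega>) (I - {i}) r}" for i r
  define A where "A i r = {\<omega>\<in>space M. U i \<omega> \<le> s r}" for i r
  define S where "S = {\<omega> \<in> space M. \<forall>t>0.
            (1 / real N) * real (card {i \<in> {1..N}. U i \<omega> \<le> t}) < t / \<delta>}"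
  have finI: "finite I" and cardI: "card I = N" using I_def by auto
  have Npos: "real N > 0" using assms(2) by simp
  have s_mono: "\<And>k l. k \<le> l \<Longrightarrow> s k \<le> s l"
    unfolding s_def using assms(7) Npos by (auto intro!: divide_right_mono mult_left_mono)
  have Umeas: "\<And>i. i\<in>I \<Longrightarrow> U i \<in> borel_measurable M" using assms(3) I_def by auto
  have restr_meas: "\<And>L. L \<subseteq> I \<Longrightarrow> (\<lambda>\<omega>. restrict (\<lambda>j. U j \<omega>) L) \<in> measurable M (PiM L (\<lambda>_. borel))"
    using Umeas by (auto intro!: measurable_restrict)
  have Ev_M: "{\<omega>\<in>space M. Ev \<delta> N c (\<lambda>j. U j \<omega>) L r} \<in> P.events" if L: "L \<subseteq> I" for L c r
  proof -
    have "{\<omega>\<in>space M. Ev \<delta> N c (\<lambda>j. U j \<omega>) L r} = (\<lambda>\<omega>. restrict (\<lambda>j. U j \<omega>) L) -` {y \<in> space (PiM L (\<lambda>_. borel)). Ev \<delta> N c y L r} \<inter> space M"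
      using Ev_restrict[of \<delta> N c _ L r] by (auto simp: space_PiM)
    then show ?thesis using measurable_sets[OF restr_meas[OF L] Ev_sets] by simp
  qed
  have E_ev: "E r \<in> P.events" for r unfolding E_def by (rule Ev_M) simp
  have Ei_ev: "Ei i r \<in> P.events" for i r unfolding Ei_def by (rule Ev_M) auto
  have A_ev: "A i r \<in> P.events" if "i \<in> I" for i r
  proof -
    have [measurable]: "U i \<in> borel_measurable M" using Umeas that by blast
    show ?thesis unfolding A_def by measurable
  qed
  have compl: "space M - S = (\<Union>r\<in>{1..N}. E r)"
  proof (intro equalityI subsetI)
    fix \<omega> assume "\<omega> \<in> space M - S"
    then have om: "\<omega> \<in> space M" and "\<not> (\<forall>t>0. (1 / real N) * real (card {i \<in> {1..N}. U i \<omega> \<le> t}) < t / \<delta>)"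
      unfolding S_def by auto
    then obtain t where t: "t > 0" "\<not> ((1 / real N) * real (card {i \<in> {1..N}. U i \<omega> \<le> t}) < t / \<delta>)"
      by auto
    define c where "c = card {i\<in>I. U i \<omega> \<le> t}"
    have tc: "t / \<delta> \<le> real c / real N" using t(2) unfolding c_def I_def by simp
    then have "t \<le> s c" unfolding s_def using assms(7) Npos by (simp add: field_simps)
    have "t / \<delta> > 0" using t(1) assms(7) by simp
    then have "real c / real N > 0" using tc by linarith
    then have "c \<ge> 1" using Npos by (cases c) auto
    have "c \<le> card I" unfolding c_def by (rule card_mono[OF finI]) auto
    then have "c \<le> N" using cardI by simp
    have "{j\<in>I. U j \<omega> \<le> t} \<subseteq> {j\<in>I. U j \<omega> \<le> s c}" using \<open>t \<le> s c\<close> by auto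
    then have "c \<le> card {j\<in>I. U j \<omega> \<le> s c}" unfolding c_def by (rule card_mono[rotated]) (simp add: finI)
    then have Qc: "real c \<le> 0 + cntf \<delta> N (\<lambda>j. U j \<omega>) I c" using cntf_card[OF finI] unfolding s_def by simp
    define K where "K = {k\<in>{1..N}. real k \<le> 0 + cntf \<delta> N (\<lambda>j. U j \<omega>) I k}"
    have cK: "c \<in> K" unfolding K_def using Qc \<open>c \<ge> 1\<close> \<open>c \<le> N\<close> by auto
    have finK: "finite K" unfolding K_def by auto
    define r where "r = Max K"
    have rK: "r \<in> K" unfolding r_def using finK cK by (intro Max_in) auto
    have "\<omega> \<in> E r" unfolding E_def Ev_def
    proof (intro CollectI conjI ballI om)
      show "real r \<le> 0 + cntf \<delta> N (\<lambda>j. U j \<omega>) I r" using rK unfolding K_def by auto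
    next
      fix k assume k: "k \<in> {r<..N}"
      show "\<not> real k \<le> 0 + cntf \<delta> N (\<lambda>j. U j \<omega>) I k"
      proof
        assume "real k \<le> 0 + cntf \<delta> N (\<lambda>j. U j \<omega>) I k"
        then have "k \<in> K" using k rK unfolding K_def by auto
        then have "k \<le> r" unfolding r_def using finK by simp
        with k show False by simp
      qed
    qed
    moreover have "r \<in> {1..N}" using rK unfolding K_def by auto
    ultimately show "\<omega> \<in> (\<Union>r\<in>{1..N}. E r)" by auto
  next
    fix \<omega> assume "\<omega> \<in> (\<Union>r\<in>{1..N}. E r)"
    then obtain r where r: "r \<in> {1..N}" "\<omega> \<in> E r" by auto
    have om: "\<omega> \<in> space M" using r unfolding E_def by auto
    have "real r \<le> cntf \<delta> N (\<lambda>j. U j \<omega>) I r" using r unfolding E_def Ev_def by auto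
    then have rc: "real r \<le> real (card {i\<in>{1..N}. U i \<omega> \<le> s r})"
      using cntf_card[OF finI] unfolding s_def I_def by simp
    have sr: "s r / \<delta> = real r / real N" unfolding s_def using assms(7) by simp
    have "s r > 0" unfolding s_def using assms(7) Npos r by simp
    moreover have "\<not> ((1 / real N) * real (card {i \<in> {1..N}. U i \<omega> \<le> s r}) < s r / \<delta>)"
      unfolding sr using divide_right_mono[OF rc, of "real N"] Npos by simp
    ultimately show "\<omega> \<in> space M - S" using om unfolding S_def by auto
  qed
  have cnt_r: "cntf \<delta> N (\<lambda>j. U j \<omega>) I r = real r" if om: "\<omega> \<in> E r" for \<omega> r
  proof -
    define m where "m = card {j\<in>I. U j \<omega> \<le> s r}"
    have cm: "cntf \<delta> N (\<lambda>j. U j \<omega>) I r = real m" unfolding m_def s_def by (rule cntf_card[OF finI])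
    from om have ev: "Ev \<delta> N 0 (\<lambda>j. U j \<omega>) I r" unfolding E_def by auto
    have "r \<le> m" using ev cm unfolding Ev_def by simp
    moreover have "\<not> r < m"
    proof
      assume "r < m"
      have "m \<le> card I" unfolding m_def by (rule card_mono[OF finI]) auto
      then have "m \<le> N" using cardI by simp
      have "{j\<in>I. U j \<omega> \<le> s r} \<subseteq> {j\<in>I. U j \<omega> \<le> s m}" using s_mono[of r m] \<open>r<m\<close> by auto
      then have "m \<le> card {j\<in>I. U j \<omega> \<le> s m}" unfolding m_def by (rule card_mono[rotated]) (simp add: finI)
      then have "real m \<le> 0 + cntf \<delta> N (\<lambda>j. U j \<omega>) I m" using cntf_card[OF finI] unfolding s_def by simp
      with ev \<open>r<m\<close> \<open>m\<le>N\<close> show False unfolding Ev_def by auto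
    qed
    ultimately show ?thesis using cm by simp
  qed
  have F2: "real r * P.prob (E r) = (\<Sum>i\<in>I. P.prob (E r \<inter> A i r))" if r: "r \<in> {1..N}" for r
  proof -
    have pw: "(\<Sum>i\<in>I. indicator (E r \<inter> A i r) \<omega>) = real r * indicator (E r) \<omega>" for \<omega>
    proof (cases "\<omega> \<in> E r")
      case True
      have "(\<Sum>i\<in>I. indicator (E r \<inter> A i r) \<omega>) = cntf \<delta> N (\<lambda>j. U j \<omega>) I r"
        unfolding cntf_def using True by (intro sum.cong) (auto simp: indicator_def A_def s_def E_def)
      with cnt_r[OF True] True show ?thesis by simp
    next
      case False then show ?thesis by (simp add: indicator_def)
    qed
    have ES: "E r \<subseteq> space M" unfolding E_def by auto
    have "(\<Sum>i\<in>I. P.prob (E r \<inter> A i r)) = (\<Sum>i\<in>I. integral\<^sup>L M (indicator (E r \<inter> A i r)))"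
      using ES by (intro sum.cong) (auto intro!: arg_cong[where f="P.prob"])
    also have "\<dots> = integral\<^sup>L M (\<lambda>\<omega>. \<Sum>i\<in>I. indicator (E r \<inter> A i r) \<omega>)"
      by (rule Bochner_Integration.integral_sum[where I=I and f="\<lambda>i. indicator (E r \<inter> A i r) :: 'a \<Rightarrow> real", symmetric]) (use E_ev A_ev in \<open>auto simp: integrable_indicator_iff less_top[symmetric]\<close>)
    also have "\<dots> = integral\<^sup>L M (\<lambda>\<omega>. real r * indicator (E r) \<omega>)"
      by (simp add: pw)
    also have "\<dots> = real r * P.prob (E r)"
      using ES by (simp add: Int_absorb2)
    finally show ?thesis by simp
  qed
  have F3: "E r \<inter> A i r = Ei i r \<inter> A i r" if r: "r \<in> {1..N}" and i: "i \<in> I" for i r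
  proof -
    have key: "cntf \<delta> N (\<lambda>j. U j \<omega>) I k = 1 + cntf \<delta> N (\<lambda>j. U j \<omega>) (I - {i}) k"
      if u: "U i \<omega> \<le> s r" and rk: "r \<le> k" for \<omega> k
    proof -
      have "cntf \<delta> N (\<lambda>j. U j \<omega>) I k = (if U i \<omega> \<le> s k then 1 else 0) + cntf \<delta> N (\<lambda>j. U j \<omega>) (I - {i}) k"
        unfolding cntf_def s_def by (rule sum.remove[OF finI i])
      moreover have "U i \<omega> \<le> s k" using u s_mono[OF rk] by linarith
      ultimately show ?thesis by simp
    qed
    have "Ev \<delta> N 0 (\<lambda>j. U j \<omega>) I r = Ev \<delta> N 1 (\<lambda>j. U j \<omega>) (I - {i}) r" if u: "U i \<omega> \<le> s r" for \<omega>
    proof -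
      have k1: "\<forall>k\<in>{r<..N}. cntf \<delta> N (\<lambda>j. U j \<omega>) I k = 1 + cntf \<delta> N (\<lambda>j. U j \<omega>) (I - {i}) k"
        using key[OF u] by auto
      show ?thesis unfolding Ev_def using key[OF u order_refl] k1 by auto
    qed
    then show ?thesis unfolding E_def Ei_def A_def by auto
  qed
  have F4: "P.prob (Ei i r \<inter> A i r) = P.prob (A i r) * P.prob (Ei i r)" if i: "i \<in> I" for i r
  proof -
    have ind: "P.indep_var (PiM {i} (\<lambda>_. borel)) (\<lambda>\<omega>. restrict (\<lambda>j. U j \<omega>) {i})
        (PiM (I - {i}) (\<lambda>_. borel)) (\<lambda>\<omega>. restrict (\<lambda>j. U j \<omega>) (I - {i}))"
      by (rule P.indep_var_restrict[OF assms(4)[folded I_def]]) (use i in auto)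
    have [measurable]: "(\<lambda>y. y i) \<in> borel_measurable (PiM {i} (\<lambda>_. borel :: real measure))"
      by (rule measurable_component_singleton) simp
    have Xa: "{y \<in> space (PiM {i} (\<lambda>_. borel)). y i \<le> s r} \<in> sets (PiM {i} (\<lambda>_. borel))"
      by measurable
    note Xb = Ev_sets[of "I - {i}" \<delta> N 1 r]
    note D = P.indep_varD[OF ind Xa Xb]
    have e1: "(\<lambda>x. (restrict (\<lambda>j. U j x) {i}, restrict (\<lambda>j. U j x) (I - {i}))) -`
        ({y \<in> space (PiM {i} (\<lambda>_. borel)). y i \<le> s r} \<times> {y \<in> space (PiM (I - {i}) (\<lambda>_. borel)). Ev \<delta> N 1 y (I - {i}) r}) \<inter> space M
        = Ei i r \<inter> A i r"
      unfolding Ei_def A_def by (auto simp: space_PiM Ev_restrict)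
    have e2: "(\<lambda>x. restrict (\<lambda>j. U j x) {i}) -` {y \<in> space (PiM {i} (\<lambda>_. borel)). y i \<le> s r} \<inter> space M = A i r"
      unfolding A_def by (auto simp: space_PiM)
    have e3: "(\<lambda>x. restrict (\<lambda>j. U j x) (I - {i})) -` {y \<in> space (PiM (I - {i}) (\<lambda>_. borel)). Ev \<delta> N 1 y (I - {i}) r} \<inter> space M = Ei i r"
      unfolding Ei_def by (auto simp: space_PiM Ev_restrict)
    show ?thesis using D unfolding e1 e2 e3 .
  qed
  have F5: "(\<Sum>r\<in>{1..N}. P.prob (Ei i r)) \<le> 1" for i
  proof -
    have disj: "disjoint_family_on (Ei i) {1..N}"
      unfolding disjoint_family_on_def
    proof (intro ballI impI)
      fix r r' assume "r \<in> {1..N}" "r' \<in> {1..N}" "r \<noteq> r'"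
      show "Ei i r \<inter> Ei i r' = {}"
      proof (cases "r < r'")
        case True
        then show ?thesis using \<open>r' \<in> {1..N}\<close> unfolding Ei_def Ev_def by auto
      next
        case False
        then have "r' < r" using \<open>r \<noteq> r'\<close> by simp
        then show ?thesis using \<open>r \<in> {1..N}\<close> unfolding Ei_def Ev_def by auto
      qed
    qed
    have "(\<Sum>r\<in>{1..N}. P.prob (Ei i r)) = P.prob (\<Union>r\<in>{1..N}. Ei i r)"
      by (rule measure_finite_Union[symmetric]) (use disj Ei_ev in auto)
    also have "\<dots> \<le> 1" by (rule P.prob_le_1)
    finally show ?thesis .
  qed
  have s_nonneg: "0 \<le> s r" for r unfolding s_def using assms(7) Npos by simp
  have s_le1: "s r \<le> 1" if r: "r \<in> {1..N}" for r
  proof -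
    have "s r \<le> s N" using r by (intro s_mono) simp
    also have "s N = \<delta>" unfolding s_def using Npos by simp
    finally show ?thesis using assms(8) by simp
  qed
  have Abnd: "P.prob (A i r) \<le> s r" if r: "r \<in> {1..N}" and i: "i \<in> I" for i r
    unfolding A_def using assms(5)[of i "s r"] i r s_nonneg s_le1 I_def by auto
  have bndE: "P.prob (E r) \<le> \<delta> / real N * (\<Sum>i\<in>I. P.prob (Ei i r))" if r: "r \<in> {1..N}" for r
  proof -
    have rpos: "real r > 0" using r by simp
    have "real r * P.prob (E r) = (\<Sum>i\<in>I. P.prob (A i r) * P.prob (Ei i r))"
      unfolding F2[OF r] using F3[OF r] F4 by simp
    also have "\<dots> \<le> (\<Sum>i\<in>I. s r * P.prob (Ei i r))"
      by (intro sum_mono mult_right_mono Abnd[OF r]) auto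
    also have "\<dots> = real r * (\<delta> / real N * (\<Sum>i\<in>I. P.prob (Ei i r)))"
      unfolding s_def by (simp add: sum_distrib_left mult_ac)
    finally have "real r * P.prob (E r) \<le> real r * (\<delta> / real N * (\<Sum>i\<in>I. P.prob (Ei i r)))" .
    then show ?thesis using rpos by (simp only: mult_le_cancel_left_pos)
  qed
  have "P.prob (space M - S) \<le> (\<Sum>r\<in>{1..N}. P.prob (E r))"
    unfolding compl using E_ev by (intro P.finite_measure_subadditive_finite) auto
  also have "\<dots> \<le> (\<Sum>r\<in>{1..N}. \<delta> / real N * (\<Sum>i\<in>I. P.prob (Ei i r)))"
    by (rule sum_mono) (rule bndE)
  also have "\<dots> = \<delta> / real N * (\<Sum>i\<in>I. (\<Sum>r\<in>{1..N}. P.prob (Ei i r)))"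
    by (simp add: sum_distrib_left sum.swap[of _ I])
  also have "\<dots> \<le> \<delta> / real N * (\<Sum>i\<in>I. 1)"
    using assms(7) Npos by (intro mult_left_mono sum_mono F5) auto
  also have "\<dots> = \<delta>" using cardI Npos by simp
  finally have le: "P.prob (space M - S) \<le> \<delta>" .
  have Sev: "S \<in> P.events"
  proof -
    have "S = space M - (space M - S)" unfolding S_def by auto
    also have "\<dots> \<in> P.events" unfolding compl using E_ev by auto
    finally show ?thesis .
  qed
  have "P.prob (space M - S) = 1 - P.prob S"
    using P.finite_measure_compl[OF Sev] P.prob_space by simp
  with le show ?thesis unfolding S_def by simp
qed

end
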